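(* For every $m \ge 1$, the commutator subgroup $TW_{m+2}'$ of the twin group $TW_{m+2}$ has rank (minimal cardinality of a generating set) equal to $2m-1$.
   Context: For $n \ge 2$, the twin group $TW_n$ is the group with generators $\tau_1,\dots,\tau_{n-1}$ and defining relations $\tau_i^2=1$ for all $i$, and $\tau_i\tau_j=\tau_j\tau_i$ whenever $|i-j|>1$. $G'$ denotes the commutator subgroup of a group $G$. *)

theory Defs
  imports "HOL-Algebra.Algebra"
begin

text \<open>Since every generator is an involution,
  the group presented by generators tau_1..tau_(n-1) with relations tau_i^2 = 1 and
  tau_i tau_j = tau_j tau_i (|i-j|>1) coincides with the monoid presented by the same
  relations.\<close>

definition tw_words :: "nat \<Rightarrow> nat list set" where
  "tw_words n = {w. set w \<subseteq> {1..<n}}"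

inductive_set tw_step :: "nat \<Rightarrow> (nat list \<times> nat list) set" for n :: nat where
  invol: "\<lbrakk>xs \<in> tw_words n; ys \<in> tw_words n; i \<in> {1..<n}\<rbrakk>
          \<Longrightarrow> (xs @ [i, i] @ ys, xs @ ys) \<in> tw_step n"
| comm: "\<lbrakk>xs \<in> tw_words n; ys \<in> tw_words n; i \<in> {1..<n}; j \<in> {1..<n};
          i + 1 < j \<or> j + 1 < i\<rbrakk>
          \<Longrightarrow> (xs @ [i, j] @ ys, xs @ [j, i] @ ys) \<in> tw_step n"

definition tw_eq :: "nat \<Rightarrow> (nat list \<times> nat list) set" where
  "tw_eq n = ((tw_step n \<union> (tw_step n)\<inverse>)\<^sup>*) \<inter> (tw_words n \<times> tw_words n)"

definition twin_group :: "nat \<Rightarrow> nat list set monoid" where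
  "twin_group n = \<lparr> carrier = tw_words n // tw_eq n,
     monoid.mult = (\<lambda>A B. \<Union>a\<in>A. \<Union>b\<in>B. tw_eq n `` {a @ b}),
     monoid.one = tw_eq n `` {[]} \<rparr>"

text \<open>Rank of a subgroup H of G: H is generated by a finite set of cardinality r,
  and every finite generating set of H has at least r elements (infinite generating
  sets trivially have larger cardinality).\<close>

definition has_rank :: "('a, 'b) monoid_scheme \<Rightarrow> 'a set \<Rightarrow> nat \<Rightarrow> bool" where
  "has_rank G H r \<longleftrightarrow>
     (\<exists>S. S \<subseteq> H \<and> finite S \<and> card S = r \<and> generate G S = H) \<and>
     (\<forall>S. S \<subseteq> H \<and> finite S \<and> generate G S = H \<longrightarrow> r \<le> card S)"

end

theory Submission
  imports Defs
begin

lemma tw_words_append[simp]: "xs @ ys \<in> tw_words n \<longleftrightarrow> xs \<in> tw_words n \<and> ys \<in> tw_words n"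
  by (auto simp: tw_words_def)

lemma tw_words_Cons[simp]: "x # xs \<in> tw_words n \<longleftrightarrow> x \<in> {1..<n} \<and> xs \<in> tw_words n"
  by (auto simp: tw_words_def)

lemma tw_words_Nil[simp]: "[] \<in> tw_words n"
  by (auto simp: tw_words_def)

lemma tw_words_rev[simp]: "rev xs \<in> tw_words n \<longleftrightarrow> xs \<in> tw_words n"
  by (auto simp: tw_words_def)

lemma step_words: "(u,v) \<in> tw_step n \<Longrightarrow> u \<in> tw_words n \<and> v \<in> tw_words n"
  by (induction rule: tw_step.induct) auto

abbreviation E :: "nat \<Rightarrow> (nat list \<times> nat list) set" where
  "E n \<equiv> tw_step n \<union> (tw_step n)\<inverse>"

lemma Estar_words: "(u,v) \<in> (E n)\<^sup>* \<Longrightarrow> u \<in> tw_words n \<Longrightarrow> v \<in> tw_words n"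
  by (induction rule: rtrancl_induct) (auto dest: step_words)

lemma step_ctx: "(u,v) \<in> tw_step n \<Longrightarrow> z \<in> tw_words n \<Longrightarrow> z' \<in> tw_words n
   \<Longrightarrow> (z@u@z', z@v@z') \<in> tw_step n"
proof (induction rule: tw_step.induct)
  case (invol xs ys i)
  then show ?case using tw_step.invol[of "z@xs" n "ys@z'" i] by simp
next
  case (comm xs ys i j)
  then show ?case using tw_step.comm[of "z@xs" n "ys@z'" i j] by simp
qed

lemma Estar_ctx: "(u,v) \<in> (E n)\<^sup>* \<Longrightarrow> z \<in> tw_words n \<Longrightarrow> z' \<in> tw_words n
   \<Longrightarrow> (z@u@z', z@v@z') \<in> (E n)\<^sup>*"
proof (induction rule: rtrancl_induct)
  case base
  then show ?case by simp
next
  case (step y w)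
  from step.hyps(2) have "(z@y@z', z@w@z') \<in> E n"
    using step_ctx[of y w n z z'] step_ctx[of w y n z z'] step.prems by auto
  then show ?case using step.IH step.prems by (meson rtrancl.rtrancl_into_rtrancl)
qed

lemma Estar_sym: "(u,v) \<in> (E n)\<^sup>* \<Longrightarrow> (v,u) \<in> (E n)\<^sup>*"
proof -
  assume "(u,v) \<in> (E n)\<^sup>*"
  then have "(v,u) \<in> ((E n)\<^sup>*)\<inverse>" by simp
  also have "((E n)\<^sup>*)\<inverse> = ((E n)\<inverse>)\<^sup>*" by (simp add: rtrancl_converse)
  also have "(E n)\<inverse> = E n" by auto
  finally show ?thesis .
qed

lemma tw_eq_iff: "(u,v) \<in> tw_eq n \<longleftrightarrow> (u,v) \<in> (E n)\<^sup>* \<and> u \<in> tw_words n \<and> v \<in> tw_words n"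
  by (auto simp: tw_eq_def)

lemma equiv_tw: "equiv (tw_words n) (tw_eq n)"
  unfolding equiv_def refl_on_def sym_def trans_def
proof (intro conjI allI impI)
  show "tw_eq n \<subseteq> tw_words n \<times> tw_words n" by (auto simp: tw_eq_def)
  show "\<forall>x\<in>tw_words n. (x, x) \<in> tw_eq n" by (auto simp: tw_eq_def)
  fix x y assume "(x, y) \<in> tw_eq n" then show "(y, x) \<in> tw_eq n"
    by (auto simp: tw_eq_iff intro: Estar_sym)
next
  fix x y z assume "(x, y) \<in> tw_eq n" "(y, z) \<in> tw_eq n" then show "(x, z) \<in> tw_eq n"
    unfolding tw_eq_iff by (meson rtrancl_trans)
qed

lemma tw_eq_append: "(u,u') \<in> tw_eq n \<Longrightarrow> (v,v') \<in> tw_eq n \<Longrightarrow> (u@v, u'@v') \<in> tw_eq n"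
proof -
  assume a: "(u,u') \<in> tw_eq n" "(v,v') \<in> tw_eq n"
  have 1: "([]@u@v, []@u'@v) \<in> (E n)\<^sup>*" using a Estar_ctx[of u u' n "[]" v] by (auto simp: tw_eq_iff)
  have 2: "(u'@v@[], u'@v'@[]) \<in> (E n)\<^sup>*" using a Estar_ctx[of v v' n u' "[]"] by (auto simp: tw_eq_iff)
  show ?thesis using 1 2 a by (auto simp: tw_eq_iff intro: rtrancl_trans)
qed

definition cls :: "nat \<Rightarrow> nat list \<Rightarrow> nat list set" where
  "cls n w = tw_eq n `` {w}"

lemma cls_eq_iff: "u \<in> tw_words n \<Longrightarrow> v \<in> tw_words n \<Longrightarrow> cls n u = cls n v \<longleftrightarrow> (u,v) \<in> tw_eq n"
  unfolding cls_def using eq_equiv_class_iff[OF equiv_tw] by blast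

lemma cls_self: "u \<in> tw_words n \<Longrightarrow> u \<in> cls n u"
  unfolding cls_def using equiv_class_self[OF equiv_tw] by blast

lemma in_cls: "v \<in> cls n u \<longleftrightarrow> (u,v) \<in> tw_eq n"
  unfolding cls_def by auto

lemma carrier_tw: "carrier (twin_group n) = cls n ` tw_words n"
  unfolding twin_group_def quotient_def cls_def by auto

lemma mult_tw: "u \<in> tw_words n \<Longrightarrow> v \<in> tw_words n \<Longrightarrow>
   cls n u \<otimes>\<^bsub>twin_group n\<^esub> cls n v = cls n (u@v)"
proof -
  assume u: "u \<in> tw_words n" and v: "v \<in> tw_words n"
  have "cls n (a@b) = cls n (u@v)" if "a \<in> cls n u" "b \<in> cls n v" for a b
  proof -
    have "(u@v, a@b) \<in> tw_eq n" using that tw_eq_append by (auto simp: in_cls)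
    then show ?thesis using cls_eq_iff[of "a@b" n "u@v"] by (auto simp: tw_eq_iff intro: Estar_sym)
  qed
  moreover have "u \<in> cls n u" "v \<in> cls n v" using u v cls_self by auto
  ultimately have "(\<Union>a\<in>cls n u. \<Union>b\<in>cls n v. cls n (a@b)) = cls n (u@v)" by blast
  then show ?thesis unfolding twin_group_def cls_def by simp
qed

lemma one_tw: "\<one>\<^bsub>twin_group n\<^esub> = cls n []"
  unfolding twin_group_def cls_def by simp

lemma rev_cancel: "w \<in> tw_words n \<Longrightarrow> (rev w @ w, []) \<in> (E n)\<^sup>*"
proof (induction w)
  case Nil
  then show ?case by simp
next
  case (Cons a w)
  have "(rev w @ [a,a] @ w, rev w @ w) \<in> tw_step n"
    using Cons.prems by (intro tw_step.invol) auto
  then have "(rev (a#w) @ (a#w), rev w @ w) \<in> E n" by simp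
  then show ?case using Cons by (meson converse_rtrancl_into_rtrancl tw_words_Cons)
qed

lemma group_tw: "group (twin_group n)"
proof (rule groupI)
  show "\<one>\<^bsub>twin_group n\<^esub> \<in> carrier (twin_group n)"
    by (auto simp: one_tw carrier_tw)
next
  fix x y assume "x \<in> carrier (twin_group n)" "y \<in> carrier (twin_group n)"
  then show "x \<otimes>\<^bsub>twin_group n\<^esub> y \<in> carrier (twin_group n)"
    by (auto simp: carrier_tw mult_tw)
next
  fix x y z assume "x \<in> carrier (twin_group n)" "y \<in> carrier (twin_group n)" "z \<in> carrier (twin_group n)"
  then show "x \<otimes>\<^bsub>twin_group n\<^esub> y \<otimes>\<^bsub>twin_group n\<^esub> z =
             x \<otimes>\<^bsub>twin_group n\<^esub> (y \<otimes>\<^bsub>twin_group n\<^esub> z)"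
    by (auto simp: carrier_tw mult_tw)
next
  fix x assume "x \<in> carrier (twin_group n)"
  then show "\<one>\<^bsub>twin_group n\<^esub> \<otimes>\<^bsub>twin_group n\<^esub> x = x"
    by (auto simp: carrier_tw mult_tw one_tw)
next
  fix x assume "x \<in> carrier (twin_group n)"
  then obtain w where w: "w \<in> tw_words n" "x = cls n w" by (auto simp: carrier_tw)
  have "cls n (rev w) \<otimes>\<^bsub>twin_group n\<^esub> x = cls n []"
    using w rev_cancel[OF w(1)] by (simp add: mult_tw cls_eq_iff tw_eq_iff)
  then show "\<exists>y\<in>carrier (twin_group n). y \<otimes>\<^bsub>twin_group n\<^esub> x = \<one>\<^bsub>twin_group n\<^esub>"
    using w by (auto simp: carrier_tw one_tw intro!: bexI[of _ "cls n (rev w)"])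
qed

lemma inv_tw: "w \<in> tw_words n \<Longrightarrow> inv\<^bsub>twin_group n\<^esub> (cls n w) = cls n (rev w)"
proof -
  assume w: "w \<in> tw_words n"
  interpret group "twin_group n" by (rule group_tw)
  have "cls n (rev w) \<otimes>\<^bsub>twin_group n\<^esub> cls n w = \<one>\<^bsub>twin_group n\<^esub>"
    using w rev_cancel[OF w] by (simp add: mult_tw cls_eq_iff tw_eq_iff one_tw)
  then show ?thesis using w by (metis carrier_tw image_eqI inv_equality tw_words_rev)
qed

section \<open>A normal form procedure\<close>

definition farp :: "nat \<Rightarrow> nat \<Rightarrow> bool" where
  "farp i j \<longleftrightarrow> i + 1 < j \<or> j + 1 < i"

fun canc :: "nat \<Rightarrow> nat list \<Rightarrow> nat list option" where
  "canc c [] = None"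
| "canc c (d # w) = (if c = d then Some w else if farp c d then map_option (Cons d) (canc c w) else None)"

fun ins :: "nat \<Rightarrow> nat list \<Rightarrow> nat list" where
  "ins c [] = [c]"
| "ins c (d # w) = (if farp c d \<and> d < c then d # ins c w else c # d # w)"

fun nf :: "nat list \<Rightarrow> nat list" where
  "nf [] = []"
| "nf (c # w) = (case canc c (nf w) of Some v \<Rightarrow> v | None \<Rightarrow> ins c (nf w))"

lemma comm_step: "c \<in> {1..<n} \<Longrightarrow> d \<in> {1..<n} \<Longrightarrow> farp c d \<Longrightarrow> w \<in> tw_words n
  \<Longrightarrow> (c # d # w, d # c # w) \<in> E n"
  using tw_step.comm[of "[]" n w c d] by (auto simp: farp_def)

lemma Estar_Cons: "(u,v) \<in> (E n)\<^sup>* \<Longrightarrow> d \<in> {1..<n} \<Longrightarrow> (d # u, d # v) \<in> (E n)\<^sup>*"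
  using Estar_ctx[of u v n "[d]" "[]"] by simp

lemma canc_sound: "canc c w = Some v \<Longrightarrow> c # w \<in> tw_words n \<Longrightarrow> (c # w, v) \<in> (E n)\<^sup>*"
proof (induction w arbitrary: v)
  case Nil
  then show ?case by simp
next
  case (Cons d w)
  show ?case
  proof (cases "c = d")
    case True
    then have "v = w" using Cons.prems by simp
    moreover have "(c # c # w, w) \<in> tw_step n"
      using tw_step.invol[of "[]" n w c] Cons.prems by simp
    ultimately show ?thesis using True by auto
  next
    case False
    then have f: "farp c d" and v: "\<exists>v'. canc c w = Some v' \<and> v = d # v'"
      using Cons.prems by (auto split: if_splits)
    then obtain v' where v': "canc c w = Some v'" "v = d # v'" by blast
    have "(c # d # w, d # c # w) \<in> E n" using comm_step[OF _ _ f] Cons.prems by auto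
    then have 1: "(c # d # w, d # c # w) \<in> (E n)\<^sup>*" by blast
    have "(c # w, v') \<in> (E n)\<^sup>*" using Cons.IH[OF v'(1)] Cons.prems by auto
    then have "(d # c # w, d # v') \<in> (E n)\<^sup>*" using Estar_Cons Cons.prems by auto
    then show ?thesis using 1 v' by (meson rtrancl_trans)
  qed
qed

lemma ins_sound: "c # w \<in> tw_words n \<Longrightarrow> (c # w, ins c w) \<in> (E n)\<^sup>*"
proof (induction w)
  case Nil
  then show ?case by simp
next
  case (Cons d w)
  show ?case
  proof (cases "farp c d \<and> d < c")
    case True
    have "(c # d # w, d # c # w) \<in> E n" using comm_step True Cons.prems by auto
    then have 1: "(c # d # w, d # c # w) \<in> (E n)\<^sup>*" by blast
    have "(d # c # w, d # ins c w) \<in> (E n)\<^sup>*" using Estar_Cons Cons by auto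
    then show ?thesis using 1 True by (auto intro: rtrancl_trans)
  next
    case False
    then have "ins c (d # w) = c # d # w" by auto
    then show ?thesis by simp
  qed
qed

lemma nf_sound: "w \<in> tw_words n \<Longrightarrow> (w, nf w) \<in> (E n)\<^sup>*"
proof (induction w)
  case Nil
  then show ?case by simp
next
  case (Cons c w)
  have 1: "(c # w, c # nf w) \<in> (E n)\<^sup>*" using Cons Estar_Cons by auto
  have nw: "nf w \<in> tw_words n" using Cons Estar_words by auto
  show ?case
  proof (cases "canc c (nf w)")
    case None
    then show ?thesis using 1 ins_sound[of c "nf w" n] nw Cons.prems by (auto intro: rtrancl_trans)
  next
    case (Some v)
    then show ?thesis using 1 canc_sound[OF Some, of n] nw Cons.prems by (auto intro: rtrancl_trans)
  qed
qed

lemma nf_eq: "u \<in> tw_words n \<Longrightarrow> v \<in> tw_words n \<Longrightarrow> nf u = nf v \<Longrightarrow> cls n u = cls n v"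
  using nf_sound[of u n] nf_sound[of v n]
  by (simp add: cls_eq_iff tw_eq_iff) (metis Estar_sym rtrancl_trans)

lemma farp_shift[simp]: "farp (c + k) (d + k) = farp c d"
  by (auto simp: farp_def)

lemma canc_shift: "canc (c + k) (map (\<lambda>x. x + k) w) = map_option (map (\<lambda>x. x + k)) (canc c w)"
  by (induction w) (auto simp: option.map_comp comp_def)

lemma ins_shift: "ins (c + k) (map (\<lambda>x. x + k) w) = map (\<lambda>x. x + k) (ins c w)"
  by (induction w) auto

lemma nf_shift: "nf (map (\<lambda>x. x + k) w) = map (\<lambda>x. x + k) (nf w)"
  by (induction w) (auto simp: canc_shift ins_shift split: option.split)

lemma shift_eq: "nf u = nf v \<Longrightarrow> nf (map (\<lambda>x. x + k) u) = nf (map (\<lambda>x. x + k) v)"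
  by (simp add: nf_shift)

lemma shift_cls: "nf u = nf v \<Longrightarrow> map (\<lambda>x. x + k) u = u' \<Longrightarrow> map (\<lambda>x. x + k) v = v' \<Longrightarrow> nf u' = nf v'"
  using shift_eq by blast

definition Aw :: "nat \<Rightarrow> nat list" where "Aw i = [i, i+1, i, i+1]"
definition Bw :: "nat \<Rightarrow> nat list" where "Bw i = [i-1, i, i+1, i, i+1, i-1]"

lemma Bw_Suc: "Bw (Suc p) = [p, p+1, p+2, p+1, p+2, p]"
  by (simp add: Bw_def)

lemma id_a_i: "nf ([i] @ Aw i @ [i]) = nf (rev (Aw i))"
  by (rule shift_cls[where u="[0,0,1,0,1,0]" and v="[1,0,1,0]" and k=i], code_simp, simp_all add: Aw_def Bw_Suc)
lemma id_a_i1: "nf ([i+1] @ Aw i @ [i+1]) = nf (rev (Aw i))"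
  by (rule shift_cls[where u="[1,0,1,0,1,1]" and v="[1,0,1,0]" and k=i], code_simp, simp_all add: Aw_def Bw_Suc)
lemma id_a_i2: "nf ([i+2] @ Aw i @ [i+2]) = nf (rev (Bw (Suc i)) @ Aw i @ Aw (i+1))"
  by (rule shift_cls[where u="[2,0,1,0,1,2]" and v="rev [0,1,2,1,2,0] @ [0,1,0,1] @ [1,2,1,2]" and k=i], code_simp, simp_all add: Aw_def Bw_Suc)
lemma id_b_0: "nf ([q] @ Bw (q+2) @ [q]) = nf (Aw q @ Bw (q+2) @ rev (Aw q))"
  by (rule shift_cls[where u="[0] @ [1,2,3,2,3,1] @ [0]" and v="[0,1,0,1] @ [1,2,3,2,3,1] @ rev [0,1,0,1]" and k=q], code_simp, simp_all add: Aw_def Bw_def Bw_Suc)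
lemma id_b_1: "nf ([p] @ Bw (Suc p) @ [p]) = nf (Aw (p+1))"
  by (rule shift_cls[where u="[0] @ [0,1,2,1,2,0] @ [0]" and v="[1,2,1,2]" and k=p], code_simp, simp_all add: Aw_def Bw_Suc)
lemma id_b_2: "nf ([p+1] @ Bw (Suc p) @ [p+1]) = nf (rev (Aw p) @ rev (Bw (Suc p)) @ Aw p)"
  by (rule shift_cls[where u="[1] @ [0,1,2,1,2,0] @ [1]" and v="rev [0,1,0,1] @ rev [0,1,2,1,2,0] @ [0,1,0,1]" and k=p], code_simp, simp_all add: Aw_def Bw_Suc)
lemma id_b_3: "nf ([p+2] @ Bw (Suc p) @ [p+2]) = nf (rev (Bw (Suc p)))"
  by (rule shift_cls[where u="[2] @ [0,1,2,1,2,0] @ [2]" and v="rev [0,1,2,1,2,0]" and k=p], code_simp, simp_all add: Aw_def Bw_Suc)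
lemma id_b_4: "nf ([p+3] @ Bw (Suc p) @ [p+3]) = nf (Aw p @ rev (Bw (p+2)) @ rev (Aw p) @ Bw (Suc p) @ Aw (p+2))"
  by (rule shift_cls[where u="[3] @ [0,1,2,1,2,0] @ [3]" and v="[0,1,0,1] @ rev [1,2,3,2,3,1] @ rev [0,1,0,1] @ [0,1,2,1,2,0] @ [2,3,2,3]" and k=p], code_simp, simp_all add: Aw_def Bw_def Bw_Suc)
lemma id_b_comm: "nf (Bw (Suc p)) = nf ([p,p+1,p] @ [p+2] @ rev [p,p+1,p] @ [p+2])"
  by (rule shift_cls[where u="[0,1,2,1,2,0]" and v="[0,1,0] @ [2] @ rev [0,1,0] @ [2]" and k=p], code_simp, simp_all add: Bw_Suc)

lemma far_comm_Estar: "j \<in> {1..<n} \<Longrightarrow> w \<in> tw_words n \<Longrightarrow> \<forall>x\<in>set w. farp j x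
  \<Longrightarrow> (j # w, w @ [j]) \<in> (E n)\<^sup>*"
proof (induction w)
  case Nil
  then show ?case by simp
next
  case (Cons d w)
  have "(j # d # w, d # j # w) \<in> E n" using comm_step[of j n d w] Cons.prems by auto
  moreover have "(d # j # w, d # (w @ [j])) \<in> (E n)\<^sup>*" using Cons Estar_Cons by auto
  ultimately show ?case by (auto intro: converse_rtrancl_into_rtrancl)
qed

lemma far_conj: "j \<in> {1..<n} \<Longrightarrow> w \<in> tw_words n \<Longrightarrow> \<forall>x\<in>set w. farp j x
  \<Longrightarrow> cls n ([j] @ w @ [j]) = cls n w"
proof -
  assume a: "j \<in> {1..<n}" "w \<in> tw_words n" "\<forall>x\<in>set w. farp j x"
  have "([] @ (j # w) @ [j], [] @ (w @ [j]) @ [j]) \<in> (E n)\<^sup>*"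
    using Estar_ctx[OF far_comm_Estar[OF a], of "[]" "[j]"] a by simp
  moreover have "(w @ [j, j] @ [], w @ []) \<in> tw_step n" using a by (intro tw_step.invol) auto
  ultimately have "([j] @ w @ [j], w) \<in> (E n)\<^sup>*" by (auto intro: rtrancl_into_rtrancl)
  then show ?thesis using a by (simp add: cls_eq_iff tw_eq_iff)
qed

lemma (in group) inv_cancel_left': "x \<in> carrier G \<Longrightarrow> y \<in> carrier G \<Longrightarrow> inv x \<otimes> (x \<otimes> y) = y"
  by (metis inv_closed l_inv l_one m_assoc)
lemma (in group) inv_cancel_left'': "x \<in> carrier G \<Longrightarrow> y \<in> carrier G \<Longrightarrow> x \<otimes> (inv x \<otimes> y) = y"
  by (metis inv_closed r_inv l_one m_assoc)

lemma (in group) comm_split_right: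
  assumes "a \<in> carrier G" "y \<in> carrier G" "z \<in> carrier G"
  shows "a \<otimes> (y \<otimes> z) \<otimes> inv a \<otimes> inv (y \<otimes> z) =
     (a \<otimes> y \<otimes> inv a \<otimes> inv y) \<otimes> (y \<otimes> (a \<otimes> z \<otimes> inv a \<otimes> inv z) \<otimes> inv y)"
  using assms by (simp add: m_assoc inv_mult_group inv_cancel_left' inv_cancel_left'')

lemma (in group) comm_split_left:
  assumes "b \<in> carrier G" "x \<in> carrier G" "y \<in> carrier G"
  shows "(b \<otimes> x) \<otimes> y \<otimes> inv (b \<otimes> x) \<otimes> inv y =
     (b \<otimes> (x \<otimes> y \<otimes> inv x \<otimes> inv y) \<otimes> inv b) \<otimes> (b \<otimes> y \<otimes> inv b \<otimes> inv y)"
  using assms by (simp add: m_assoc inv_mult_group inv_cancel_left' inv_cancel_left'')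

lemma (in group) conj_inv: "t \<in> carrier G \<Longrightarrow> h \<in> carrier G \<Longrightarrow> inv t = t \<Longrightarrow>
   t \<otimes> inv h \<otimes> t = inv (t \<otimes> h \<otimes> t)"
  by (metis inv_mult_group m_assoc m_closed)

lemma (in group) conj_mult: "t \<in> carrier G \<Longrightarrow> h1 \<in> carrier G \<Longrightarrow> h2 \<in> carrier G \<Longrightarrow> t \<otimes> t = \<one> \<Longrightarrow>
   t \<otimes> (h1 \<otimes> h2) \<otimes> t = (t \<otimes> h1 \<otimes> t) \<otimes> (t \<otimes> h2 \<otimes> t)"
proof -
  assume a: "t \<in> carrier G" "h1 \<in> carrier G" "h2 \<in> carrier G" "t \<otimes> t = \<one>"
  have tt: "t \<otimes> (t \<otimes> x) = x" if "x \<in> carrier G" for x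
    using a that by (metis m_assoc l_one)
  show ?thesis using a by (simp add: m_assoc tt)
qed

definition Sg :: "nat \<Rightarrow> nat list set set" where
  "Sg m = (\<lambda>i. cls (m+2) (Aw i)) ` {1..m} \<union> (\<lambda>i. cls (m+2) (Bw i)) ` {2..m}"

definition Ng :: "nat \<Rightarrow> nat list set set" where
  "Ng m = generate (twin_group (m+2)) (Sg m)"

lemma Aw_words[simp]: "Aw i \<in> tw_words n \<longleftrightarrow> 1 \<le> i \<and> i + 1 < n"
  by (auto simp: Aw_def)
lemma Bw_words[simp]: "2 \<le> i \<Longrightarrow> Bw i \<in> tw_words n \<longleftrightarrow> i + 1 < n"
  by (auto simp: Bw_def)

lemma Sg_carrier: "Sg m \<subseteq> carrier (twin_group (m+2))"
  by (auto simp: Sg_def carrier_tw)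

lemma Ng_subgroup: "subgroup (Ng m) (twin_group (m+2))"
  unfolding Ng_def using group.generate_is_subgroup[OF group_tw Sg_carrier] .

lemma cls_app_N: "u \<in> tw_words (m+2) \<Longrightarrow> v \<in> tw_words (m+2) \<Longrightarrow> cls (m+2) u \<in> Ng m
   \<Longrightarrow> cls (m+2) v \<in> Ng m \<Longrightarrow> cls (m+2) (u @ v) \<in> Ng m"
  using subgroup.m_closed[OF Ng_subgroup] mult_tw by metis

lemma cls_rev_N: "u \<in> tw_words (m+2) \<Longrightarrow> cls (m+2) u \<in> Ng m \<Longrightarrow> cls (m+2) (rev u) \<in> Ng m"
  using subgroup.m_inv_closed[OF Ng_subgroup] inv_tw by metis

lemma A_N: "1 \<le> i \<Longrightarrow> i \<le> m \<Longrightarrow> cls (m+2) (Aw i) \<in> Ng m"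
  unfolding Ng_def Sg_def by (rule generate.incl) auto

lemma B_N: "2 \<le> i \<Longrightarrow> i \<le> m \<Longrightarrow> cls (m+2) (Bw i) \<in> Ng m"
  unfolding Ng_def Sg_def by (rule generate.incl) auto

lemma nf_eq': "nf u = nf v \<Longrightarrow> u \<in> tw_words n \<Longrightarrow> v \<in> tw_words n \<Longrightarrow> cls n u = cls n v"
  using nf_eq by blast

lemma conjA:
  assumes i: "1 \<le> i" "i \<le> m" and j: "1 \<le> j" "j \<le> m + 1"
  shows "cls (m+2) ([j] @ Aw i @ [j]) \<in> Ng m"
proof -
  have "j = i \<or> j = i + 1 \<or> j = i + 2 \<or> j + 1 = i \<or> j + 2 \<le> i \<or> i + 3 \<le> j" by arith
  then consider "j = i" | "j = i + 1" | "j = i + 2" | "j + 1 = i" | "\<forall>x\<in>set (Aw i). farp j x"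
    unfolding Aw_def farp_def by auto
  then show ?thesis
  proof cases
    case 1
    have e: "cls (m+2) ([j] @ Aw i @ [j]) = cls (m+2) (rev (Aw i))"
      using nf_eq'[OF id_a_i[of i], of "m+2"] i j 1 by simp
    show ?thesis unfolding e using i j by (intro cls_rev_N A_N) auto
  next
    case 2
    have e: "cls (m+2) ([j] @ Aw i @ [j]) = cls (m+2) (rev (Aw i))"
      using nf_eq'[OF id_a_i1[of i], of "m+2"] i j 2 by simp
    show ?thesis unfolding e using i j by (intro cls_rev_N A_N) auto
  next
    case 3
    have e: "cls (m+2) ([j] @ Aw i @ [j]) = cls (m+2) (rev (Bw (Suc i)) @ Aw i @ Aw (i+1))"
      using nf_eq'[OF id_a_i2[of i], of "m+2"] i j 3 by simp
    show ?thesis unfolding e using i j 3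
      by (intro cls_app_N cls_rev_N A_N B_N) auto
  next
    case 4
    then have "[j] @ Aw i @ [j] = Bw i" by (auto simp: Aw_def Bw_def)
    then show ?thesis using B_N i j 4 by auto
  next
    case 5
    then show ?thesis using far_conj[of j "m+2" "Aw i"] i j A_N by simp
  qed
qed

lemma conjB:
  assumes i: "2 \<le> i" "i \<le> m" and j: "1 \<le> j" "j \<le> m + 1"
  shows "cls (m+2) ([j] @ Bw i @ [j]) \<in> Ng m"
proof -
  define p where "p = i - 1"
  have p: "i = Suc p" "1 \<le> p" using i unfolding p_def by arith+
  have "j + 1 = p \<or> j = p \<or> j = p + 1 \<or> j = p + 2 \<or> j = p + 3 \<or> j + 2 \<le> p \<or> p + 4 \<le> j" by arith
  then consider "j + 1 = p" | "j = p" | "j = p + 1" | "j = p + 2" | "j = p + 3" | "\<forall>x\<in>set (Bw i). farp j x"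
    unfolding p(1) Bw_Suc farp_def by auto
  then show ?thesis
  proof cases
    case 1
    have e: "cls (m+2) ([j] @ Bw i @ [j]) = cls (m+2) (Aw j @ Bw i @ rev (Aw j))"
      using nf_eq'[OF id_b_0[of j], of "m+2"] i j p 1 by simp
    show ?thesis unfolding e using i j p 1
      by (intro cls_app_N cls_rev_N A_N B_N) auto
  next
    case 2
    have e: "cls (m+2) ([j] @ Bw i @ [j]) = cls (m+2) (Aw i)"
      using nf_eq'[OF id_b_1[of p], of "m+2"] i j p 2 by simp
    show ?thesis unfolding e using i j p 2 by (intro A_N) auto
  next
    case 3
    have e: "cls (m+2) ([j] @ Bw i @ [j]) = cls (m+2) (rev (Aw p) @ rev (Bw i) @ Aw p)"
      using nf_eq'[OF id_b_2[of p], of "m+2"] i j p 3 by simp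
    show ?thesis unfolding e using i j p 3
      by (intro cls_app_N cls_rev_N A_N B_N) auto
  next
    case 4
    have e: "cls (m+2) ([j] @ Bw i @ [j]) = cls (m+2) (rev (Bw i))"
      using nf_eq'[OF id_b_3[of p], of "m+2"] i j p 4 by simp
    show ?thesis unfolding e using i j p 4
      by (intro cls_app_N cls_rev_N A_N B_N) auto
  next
    case 5
    have e: "cls (m+2) ([j] @ Bw i @ [j]) = cls (m+2) (Aw p @ rev (Bw (p+2)) @ rev (Aw p) @ Bw i @ Aw (p+2))"
      using nf_eq'[OF id_b_4[of p], of "m+2"] i j p 5 by simp
    show ?thesis unfolding e using i j p 5
      by (intro cls_app_N cls_rev_N A_N B_N) auto
  next
    case 6
    then show ?thesis using far_conj[of j "m+2" "Bw i"] i j B_N by simp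
  qed
qed

section \<open>Upper bound: the commutator subgroup is generated by Sg\<close>

abbreviation T :: "nat \<Rightarrow> nat \<Rightarrow> nat list set" where
  "T n j \<equiv> cls n [j]"

lemma T_carrier: "1 \<le> j \<Longrightarrow> j < n \<Longrightarrow> T n j \<in> carrier (twin_group n)"
  by (auto simp: carrier_tw)

lemma T_inv: "1 \<le> j \<Longrightarrow> j < n \<Longrightarrow> inv\<^bsub>twin_group n\<^esub> (T n j) = T n j"
  using inv_tw[of "[j]" n] by simp

lemma TT: "1 \<le> j \<Longrightarrow> j < n \<Longrightarrow> T n j \<otimes>\<^bsub>twin_group n\<^esub> T n j = \<one>\<^bsub>twin_group n\<^esub>"
proof -
  assume j: "1 \<le> j" "j < n"
  have "([] @ [j, j] @ [], [] @ []) \<in> tw_step n" using j by (intro tw_step.invol) auto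
  then have "cls n [j, j] = cls n []" using j by (simp add: cls_eq_iff tw_eq_iff r_into_rtrancl)
  then show ?thesis using j by (simp add: mult_tw one_tw)
qed

lemma conj_cls: "1 \<le> j \<Longrightarrow> j < n \<Longrightarrow> w \<in> tw_words n \<Longrightarrow>
  T n j \<otimes>\<^bsub>twin_group n\<^esub> cls n w \<otimes>\<^bsub>twin_group n\<^esub> T n j = cls n ([j] @ w @ [j])"
  by (simp add: mult_tw)

lemma conj_gen: "h \<in> Sg m \<Longrightarrow> 1 \<le> j \<Longrightarrow> j \<le> m + 1 \<Longrightarrow>
   T (m+2) j \<otimes>\<^bsub>twin_group (m+2)\<^esub> h \<otimes>\<^bsub>twin_group (m+2)\<^esub> T (m+2) j \<in> Ng m"
proof -
  assume h: "h \<in> Sg m" and j: "1 \<le> j" "j \<le> m + 1"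
  from h consider i where "1 \<le> i" "i \<le> m" "h = cls (m+2) (Aw i)"
    | i where "2 \<le> i" "i \<le> m" "h = cls (m+2) (Bw i)" unfolding Sg_def by auto
  then show ?thesis
  proof cases
    case 1
    then show ?thesis using conj_cls[of j "m+2" "Aw i"] conjA[of i m j] j by simp
  next
    case 2
    then show ?thesis using conj_cls[of j "m+2" "Bw i"] conjB[of i m j] j by simp
  qed
qed

lemma conj_N: "x \<in> Ng m \<Longrightarrow> 1 \<le> j \<Longrightarrow> j \<le> m + 1 \<Longrightarrow>
   T (m+2) j \<otimes>\<^bsub>twin_group (m+2)\<^esub> x \<otimes>\<^bsub>twin_group (m+2)\<^esub> T (m+2) j \<in> Ng m"
proof -
  assume x: "x \<in> Ng m" and j: "1 \<le> j" "j \<le> m + 1"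
  interpret G: group "twin_group (m+2)" by (rule group_tw)
  interpret N: subgroup "Ng m" "twin_group (m+2)" by (rule Ng_subgroup)
  have Tc: "T (m+2) j \<in> carrier (twin_group (m+2))" using j by (intro T_carrier) auto
  have TT': "T (m+2) j \<otimes>\<^bsub>twin_group (m+2)\<^esub> T (m+2) j = \<one>\<^bsub>twin_group (m+2)\<^esub>"
    using j by (intro TT) auto
  have Ti: "inv\<^bsub>twin_group (m+2)\<^esub> (T (m+2) j) = T (m+2) j" using j by (intro T_inv) auto
  from x show ?thesis unfolding Ng_def
  proof (induction rule: generate.induct)
    case one
    have "T (m+2) j \<otimes>\<^bsub>twin_group (m+2)\<^esub> \<one>\<^bsub>twin_group (m+2)\<^esub> \<otimes>\<^bsub>twin_group (m+2)\<^esub> T (m+2) j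
       = \<one>\<^bsub>twin_group (m+2)\<^esub>" by (simp only: G.r_one[OF Tc] TT')
    then show ?case using N.one_closed by (simp only: Ng_def)
  next
    case (incl h)
    then show ?case using conj_gen j by (simp add: Ng_def)
  next
    case (inv h)
    have hc: "h \<in> carrier (twin_group (m+2))" using inv Sg_carrier by auto
    have "T (m+2) j \<otimes>\<^bsub>twin_group (m+2)\<^esub> inv\<^bsub>twin_group (m+2)\<^esub> h \<otimes>\<^bsub>twin_group (m+2)\<^esub> T (m+2) j
        = inv\<^bsub>twin_group (m+2)\<^esub> (T (m+2) j \<otimes>\<^bsub>twin_group (m+2)\<^esub> h \<otimes>\<^bsub>twin_group (m+2)\<^esub> T (m+2) j)"
      by (rule G.conj_inv[OF Tc hc Ti])
    moreover have "T (m+2) j \<otimes>\<^bsub>twin_group (m+2)\<^esub> h \<otimes>\<^bsub>twin_group (m+2)\<^esub> T (m+2) j \<in> Ng m"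
      using conj_gen inv j by auto
    ultimately show ?case using N.m_inv_closed by (simp add: Ng_def)
  next
    case (eng h1 h2)
    have c: "h1 \<in> carrier (twin_group (m+2))" "h2 \<in> carrier (twin_group (m+2))"
      using eng.hyps N.subset by (auto simp: Ng_def)
    have "T (m+2) j \<otimes>\<^bsub>twin_group (m+2)\<^esub> (h1 \<otimes>\<^bsub>twin_group (m+2)\<^esub> h2) \<otimes>\<^bsub>twin_group (m+2)\<^esub> T (m+2) j
      = (T (m+2) j \<otimes>\<^bsub>twin_group (m+2)\<^esub> h1 \<otimes>\<^bsub>twin_group (m+2)\<^esub> T (m+2) j) \<otimes>\<^bsub>twin_group (m+2)\<^esub>
        (T (m+2) j \<otimes>\<^bsub>twin_group (m+2)\<^esub> h2 \<otimes>\<^bsub>twin_group (m+2)\<^esub> T (m+2) j)"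
      by (rule G.conj_mult[OF Tc c TT'])
    then show ?case using eng.IH N.m_closed by (simp add: Ng_def)
  qed
qed

lemma (in group) conj_one': "x \<in> carrier G \<Longrightarrow> \<one> \<otimes> x \<otimes> inv \<one> = x"
  by simp

lemma (in group) conj_prod: "t \<in> carrier G \<Longrightarrow> c \<in> carrier G \<Longrightarrow> x \<in> carrier G \<Longrightarrow> inv t = t \<Longrightarrow>
   (t \<otimes> c) \<otimes> x \<otimes> inv (t \<otimes> c) = t \<otimes> (c \<otimes> x \<otimes> inv c) \<otimes> t"
  by (simp add: m_assoc inv_mult_group)

lemma (in group) comm_one_right: "a \<in> carrier G \<Longrightarrow> a \<otimes> \<one> \<otimes> inv a \<otimes> inv \<one> = \<one>"
  by simp

lemma (in group) comm_one_left: "y \<in> carrier G \<Longrightarrow> \<one> \<otimes> y \<otimes> inv \<one> \<otimes> inv y = \<one>"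
  by simp

lemma cls_Cons: "j # w \<in> tw_words n \<Longrightarrow> cls n (j # w) = T n j \<otimes>\<^bsub>twin_group n\<^esub> cls n w"
  using mult_tw[of "[j]" n w] by simp

lemma conjw_N: "w \<in> tw_words (m+2) \<Longrightarrow> x \<in> Ng m \<Longrightarrow>
  cls (m+2) w \<otimes>\<^bsub>twin_group (m+2)\<^esub> x \<otimes>\<^bsub>twin_group (m+2)\<^esub> inv\<^bsub>twin_group (m+2)\<^esub> (cls (m+2) w) \<in> Ng m"
proof (induction w)
  case Nil
  interpret G: group "twin_group (m+2)" by (rule group_tw)
  interpret N: subgroup "Ng m" "twin_group (m+2)" by (rule Ng_subgroup)
  show ?case using G.conj_one'[of x] Nil N.subset by (auto simp only: one_tw[symmetric])
next
  case (Cons j w)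
  interpret G: group "twin_group (m+2)" by (rule group_tw)
  interpret N: subgroup "Ng m" "twin_group (m+2)" by (rule Ng_subgroup)
  have j: "1 \<le> j" "j < m + 2" and w: "w \<in> tw_words (m+2)" using Cons.prems by auto
  have Tc: "T (m+2) j \<in> carrier (twin_group (m+2))" using j T_carrier by blast
  have wc: "cls (m+2) w \<in> carrier (twin_group (m+2))" using w by (auto simp: carrier_tw)
  have xc: "x \<in> carrier (twin_group (m+2))" using Cons.prems N.subset by auto
  have e: "cls (m+2) (j # w) \<otimes>\<^bsub>twin_group (m+2)\<^esub> x \<otimes>\<^bsub>twin_group (m+2)\<^esub> inv\<^bsub>twin_group (m+2)\<^esub> (cls (m+2) (j # w))
    = T (m+2) j \<otimes>\<^bsub>twin_group (m+2)\<^esub> (cls (m+2) w \<otimes>\<^bsub>twin_group (m+2)\<^esub> x \<otimes>\<^bsub>twin_group (m+2)\<^esub> inv\<^bsub>twin_group (m+2)\<^esub> (cls (m+2) w)) \<otimes>\<^bsub>twin_group (m+2)\<^esub> T (m+2) j"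
    unfolding cls_Cons[OF Cons.prems(1)] by (rule G.conj_prod[OF Tc wc xc T_inv[OF j]])
  show ?case unfolding e using conj_N[OF Cons.IH[OF w Cons.prems(2)]] j by auto
qed

lemma cls_far_cancel: "1 \<le> i \<Longrightarrow> i < n \<Longrightarrow> 1 \<le> j \<Longrightarrow> j < n \<Longrightarrow> farp i j \<Longrightarrow> cls n [i,j,i,j] = cls n []"
proof -
  assume a: "1 \<le> i" "i < n" "1 \<le> j" "j < n" "farp i j"
  have 1: "([i] @ [j,i] @ [j], [i] @ [i,j] @ [j]) \<in> tw_step n" using a by (intro tw_step.comm) (auto simp: farp_def)
  have 2: "([] @ [i,i] @ [j,j], [] @ [j,j]) \<in> tw_step n" using a by (intro tw_step.invol) auto
  have 3: "([] @ [j,j] @ [], [] @ []) \<in> tw_step n" using a by (intro tw_step.invol) auto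
  have "([i,j,i,j], []) \<in> (E n)\<^sup>*" using 1 2 3
    by (simp only: append.simps) (meson UnI1 converse_rtrancl_into_rtrancl rtrancl.rtrancl_refl)
  then show ?thesis using a by (simp add: cls_eq_iff tw_eq_iff)
qed

lemma cls_same_cancel: "1 \<le> i \<Longrightarrow> i < n \<Longrightarrow> cls n [i,i,i,i] = cls n []"
proof -
  assume a: "1 \<le> i" "i < n"
  have 2: "([] @ [i,i] @ [i,i], [] @ [i,i]) \<in> tw_step n" using a by (intro tw_step.invol) auto
  have 3: "([] @ [i,i] @ [], [] @ []) \<in> tw_step n" using a by (intro tw_step.invol) auto
  have "([i,i,i,i], []) \<in> (E n)\<^sup>*" using 2 3
    by (simp only: append.simps) (meson UnI1 converse_rtrancl_into_rtrancl rtrancl.rtrancl_refl)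
  then show ?thesis using a by (simp add: cls_eq_iff tw_eq_iff)
qed

lemma commT: "1 \<le> i \<Longrightarrow> i \<le> m + 1 \<Longrightarrow> 1 \<le> j \<Longrightarrow> j \<le> m + 1 \<Longrightarrow>
  T (m+2) i \<otimes>\<^bsub>twin_group (m+2)\<^esub> T (m+2) j \<otimes>\<^bsub>twin_group (m+2)\<^esub> inv\<^bsub>twin_group (m+2)\<^esub> (T (m+2) i)
   \<otimes>\<^bsub>twin_group (m+2)\<^esub> inv\<^bsub>twin_group (m+2)\<^esub> (T (m+2) j) \<in> Ng m"
proof -
  assume a: "1 \<le> i" "i \<le> m + 1" "1 \<le> j" "j \<le> m + 1"
  interpret N: subgroup "Ng m" "twin_group (m+2)" by (rule Ng_subgroup)
  have e: "T (m+2) i \<otimes>\<^bsub>twin_group (m+2)\<^esub> T (m+2) j \<otimes>\<^bsub>twin_group (m+2)\<^esub> inv\<^bsub>twin_group (m+2)\<^esub> (T (m+2) i)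
   \<otimes>\<^bsub>twin_group (m+2)\<^esub> inv\<^bsub>twin_group (m+2)\<^esub> (T (m+2) j) = cls (m+2) [i,j,i,j]"
    using a by (simp add: T_inv mult_tw)
  have "j = i + 1 \<or> i = j + 1 \<or> i = j \<or> farp i j" by (auto simp: farp_def)
  moreover
  { assume "j = i + 1" then have "cls (m+2) [i,j,i,j] \<in> Ng m" using A_N[of i m] a by (simp add: Aw_def) }
  moreover
  { assume "i = j + 1" then have "cls (m+2) [i,j,i,j] \<in> Ng m" using cls_rev_N[OF _ A_N[of j m]] a by (simp add: Aw_def) }
  moreover
  { assume "i = j" then have "cls (m+2) [i,j,i,j] \<in> Ng m" using cls_same_cancel[of i "m+2"] a N.one_closed
      by (simp add: one_tw) }
  moreover
  { assume "farp i j" then have "cls (m+2) [i,j,i,j] \<in> Ng m" using cls_far_cancel[of i "m+2" j] a N.one_closed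
      by (simp add: one_tw) }
  ultimately show ?thesis unfolding e by blast
qed

lemma commTw: "1 \<le> j \<Longrightarrow> j \<le> m + 1 \<Longrightarrow> w \<in> tw_words (m+2) \<Longrightarrow>
  T (m+2) j \<otimes>\<^bsub>twin_group (m+2)\<^esub> cls (m+2) w \<otimes>\<^bsub>twin_group (m+2)\<^esub> inv\<^bsub>twin_group (m+2)\<^esub> (T (m+2) j)
   \<otimes>\<^bsub>twin_group (m+2)\<^esub> inv\<^bsub>twin_group (m+2)\<^esub> (cls (m+2) w) \<in> Ng m"
proof (induction w)
  case Nil
  interpret G: group "twin_group (m+2)" by (rule group_tw)
  interpret N: subgroup "Ng m" "twin_group (m+2)" by (rule Ng_subgroup)
  have Tc: "T (m+2) j \<in> carrier (twin_group (m+2))" using Nil T_carrier by simp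
  show ?case using G.comm_one_right[OF Tc] N.one_closed by (simp only: one_tw[symmetric])
next
  case (Cons l w)
  interpret G: group "twin_group (m+2)" by (rule group_tw)
  interpret N: subgroup "Ng m" "twin_group (m+2)" by (rule Ng_subgroup)
  have l: "1 \<le> l" "l < m + 2" and w: "w \<in> tw_words (m+2)" using Cons.prems by auto
  have Tc: "T (m+2) j \<in> carrier (twin_group (m+2))" using Cons.prems T_carrier by simp
  have Tl: "T (m+2) l \<in> carrier (twin_group (m+2))" using l T_carrier by blast
  have wc: "cls (m+2) w \<in> carrier (twin_group (m+2))" using w by (auto simp: carrier_tw)
  have IH: "T (m+2) j \<otimes>\<^bsub>twin_group (m+2)\<^esub> cls (m+2) w \<otimes>\<^bsub>twin_group (m+2)\<^esub> inv\<^bsub>twin_group (m+2)\<^esub> (T (m+2) j)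
   \<otimes>\<^bsub>twin_group (m+2)\<^esub> inv\<^bsub>twin_group (m+2)\<^esub> (cls (m+2) w) \<in> Ng m" using Cons w by auto
  have c1: "T (m+2) j \<otimes>\<^bsub>twin_group (m+2)\<^esub> T (m+2) l \<otimes>\<^bsub>twin_group (m+2)\<^esub> inv\<^bsub>twin_group (m+2)\<^esub> (T (m+2) j)
   \<otimes>\<^bsub>twin_group (m+2)\<^esub> inv\<^bsub>twin_group (m+2)\<^esub> (T (m+2) l) \<in> Ng m"
    using commT[of j m l] Cons.prems l by simp
  have c2: "T (m+2) l \<otimes>\<^bsub>twin_group (m+2)\<^esub> (T (m+2) j \<otimes>\<^bsub>twin_group (m+2)\<^esub> cls (m+2) w \<otimes>\<^bsub>twin_group (m+2)\<^esub> inv\<^bsub>twin_group (m+2)\<^esub> (T (m+2) j)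
   \<otimes>\<^bsub>twin_group (m+2)\<^esub> inv\<^bsub>twin_group (m+2)\<^esub> (cls (m+2) w)) \<otimes>\<^bsub>twin_group (m+2)\<^esub> inv\<^bsub>twin_group (m+2)\<^esub> (T (m+2) l) \<in> Ng m"
    using conjw_N[OF _ IH, of "[l]"] l by simp
  show ?case unfolding cls_Cons[OF Cons.prems(3)] G.comm_split_right[OF Tc Tl wc]
    by (rule N.m_closed[OF c1 c2])
qed

lemma comm_all: "u \<in> tw_words (m+2) \<Longrightarrow> y \<in> carrier (twin_group (m+2)) \<Longrightarrow>
  cls (m+2) u \<otimes>\<^bsub>twin_group (m+2)\<^esub> y \<otimes>\<^bsub>twin_group (m+2)\<^esub> inv\<^bsub>twin_group (m+2)\<^esub> (cls (m+2) u)
   \<otimes>\<^bsub>twin_group (m+2)\<^esub> inv\<^bsub>twin_group (m+2)\<^esub> y \<in> Ng m"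
proof (induction u)
  case Nil
  interpret G: group "twin_group (m+2)" by (rule group_tw)
  interpret N: subgroup "Ng m" "twin_group (m+2)" by (rule Ng_subgroup)
  show ?case using G.comm_one_left[OF Nil(2)] N.one_closed by (simp only: one_tw[symmetric])
next
  case (Cons j u)
  interpret G: group "twin_group (m+2)" by (rule group_tw)
  interpret N: subgroup "Ng m" "twin_group (m+2)" by (rule Ng_subgroup)
  have j: "1 \<le> j" "j < m + 2" and u: "u \<in> tw_words (m+2)" using Cons.prems by auto
  have Tj: "T (m+2) j \<in> carrier (twin_group (m+2))" using j T_carrier by blast
  have uc: "cls (m+2) u \<in> carrier (twin_group (m+2))" using u by (auto simp: carrier_tw)
  obtain v where v: "v \<in> tw_words (m+2)" "y = cls (m+2) v" using Cons.prems(2) by (auto simp: carrier_tw)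
  have c1: "T (m+2) j \<otimes>\<^bsub>twin_group (m+2)\<^esub> (cls (m+2) u \<otimes>\<^bsub>twin_group (m+2)\<^esub> y \<otimes>\<^bsub>twin_group (m+2)\<^esub> inv\<^bsub>twin_group (m+2)\<^esub> (cls (m+2) u)
   \<otimes>\<^bsub>twin_group (m+2)\<^esub> inv\<^bsub>twin_group (m+2)\<^esub> y) \<otimes>\<^bsub>twin_group (m+2)\<^esub> inv\<^bsub>twin_group (m+2)\<^esub> (T (m+2) j) \<in> Ng m"
    using conjw_N[OF _ Cons.IH[OF u Cons.prems(2)], of "[j]"] j by simp
  have c2: "T (m+2) j \<otimes>\<^bsub>twin_group (m+2)\<^esub> y \<otimes>\<^bsub>twin_group (m+2)\<^esub> inv\<^bsub>twin_group (m+2)\<^esub> (T (m+2) j)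
   \<otimes>\<^bsub>twin_group (m+2)\<^esub> inv\<^bsub>twin_group (m+2)\<^esub> y \<in> Ng m"
    using commTw[of j m v] j v by simp
  show ?case unfolding cls_Cons[OF Cons.prems(1)] G.comm_split_left[OF Tj uc Cons.prems(2)]
    by (rule N.m_closed[OF c1 c2])
qed

lemma derived_sub: "derived (twin_group (m+2)) (carrier (twin_group (m+2))) \<subseteq> Ng m"
proof -
  interpret G: group "twin_group (m+2)" by (rule group_tw)
  have "derived_set (twin_group (m+2)) (carrier (twin_group (m+2))) \<subseteq> Ng m"
  proof
    fix z assume "z \<in> derived_set (twin_group (m+2)) (carrier (twin_group (m+2)))"
    then obtain x y where xy: "x \<in> carrier (twin_group (m+2))" "y \<in> carrier (twin_group (m+2))"
      "z = x \<otimes>\<^bsub>twin_group (m+2)\<^esub> y \<otimes>\<^bsub>twin_group (m+2)\<^esub> inv\<^bsub>twin_group (m+2)\<^esub> x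
          \<otimes>\<^bsub>twin_group (m+2)\<^esub> inv\<^bsub>twin_group (m+2)\<^esub> y" by blast
    obtain u where "u \<in> tw_words (m+2)" "x = cls (m+2) u" using xy(1) by (auto simp: carrier_tw)
    then show "z \<in> Ng m" using comm_all xy by blast
  qed
  then show ?thesis unfolding derived_def by (rule G.generate_subgroup_incl[OF _ Ng_subgroup])
qed

lemma A_in_D: "1 \<le> i \<Longrightarrow> i \<le> m \<Longrightarrow>
  cls (m+2) (Aw i) \<in> derived (twin_group (m+2)) (carrier (twin_group (m+2)))"
proof -
  assume i: "1 \<le> i" "i \<le> m"
  have Ti: "T (m+2) i \<in> carrier (twin_group (m+2))" "T (m+2) (i+1) \<in> carrier (twin_group (m+2))"
    using i T_carrier by auto
  have e: "cls (m+2) (Aw i) = T (m+2) i \<otimes>\<^bsub>twin_group (m+2)\<^esub> T (m+2) (i+1) \<otimes>\<^bsub>twin_group (m+2)\<^esub>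
     inv\<^bsub>twin_group (m+2)\<^esub> (T (m+2) i) \<otimes>\<^bsub>twin_group (m+2)\<^esub> inv\<^bsub>twin_group (m+2)\<^esub> (T (m+2) (i+1))"
    using i by (simp add: T_inv mult_tw Aw_def)
  show ?thesis unfolding derived_def e using Ti by (intro generate.incl) blast
qed

lemma B_in_D: "2 \<le> i \<Longrightarrow> i \<le> m \<Longrightarrow>
  cls (m+2) (Bw i) \<in> derived (twin_group (m+2)) (carrier (twin_group (m+2)))"
proof -
  assume i: "2 \<le> i" "i \<le> m"
  define p where "p = i - 1"
  have p: "i = Suc p" "1 \<le> p" using i unfolding p_def by arith+
  have X: "cls (m+2) [p,p+1,p] \<in> carrier (twin_group (m+2))" and Y: "T (m+2) (p+2) \<in> carrier (twin_group (m+2))"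
    using i p by (auto simp: carrier_tw)
  have "cls (m+2) (Bw i) = cls (m+2) ([p,p+1,p] @ [p+2] @ rev [p,p+1,p] @ [p+2])"
    using nf_eq'[OF id_b_comm[of p], of "m+2"] i p by simp
  also have "\<dots> = cls (m+2) [p,p+1,p] \<otimes>\<^bsub>twin_group (m+2)\<^esub> T (m+2) (p+2) \<otimes>\<^bsub>twin_group (m+2)\<^esub>
     inv\<^bsub>twin_group (m+2)\<^esub> (cls (m+2) [p,p+1,p]) \<otimes>\<^bsub>twin_group (m+2)\<^esub> inv\<^bsub>twin_group (m+2)\<^esub> (T (m+2) (p+2))"
    using i p by (simp add: inv_tw mult_tw)
  finally show ?thesis unfolding derived_def using X Y by (intro generate.incl) blast
qed

lemma Sg_sub_D: "Sg m \<subseteq> derived (twin_group (m+2)) (carrier (twin_group (m+2)))"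
  unfolding Sg_def using A_in_D B_in_D by auto

lemma gen_Sg: "generate (twin_group (m+2)) (Sg m) = derived (twin_group (m+2)) (carrier (twin_group (m+2)))"
proof -
  interpret G: group "twin_group (m+2)" by (rule group_tw)
  have "generate (twin_group (m+2)) (Sg m) \<subseteq> derived (twin_group (m+2)) (carrier (twin_group (m+2)))"
    by (rule G.generate_subgroup_incl[OF Sg_sub_D G.derived_is_subgroup]) simp
  then show ?thesis using derived_sub[of m] unfolding Ng_def by blast
qed

section \<open>Lower bound: cocycles\<close>

definition par :: "nat list \<Rightarrow> nat \<Rightarrow> bool" where
  "par w = (\<lambda>p. odd (count_list w p))"

lemma count_list_append': "count_list (u @ v) x = count_list u x + count_list v x"
  by (induction u) auto

lemma count_list_rev': "count_list (rev u) x = count_list u x"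
  by (induction u) (auto simp: count_list_append')

lemma par_append: "par (u @ v) p = (par u p \<noteq> par v p)"
  by (auto simp: par_def count_list_append')

lemma par_rev[simp]: "par (rev u) = par u"
  by (auto simp: par_def count_list_rev')

lemma par_Nil[simp]: "par [] = (\<lambda>p. False)"
  by (auto simp: par_def)

fun Fr :: "((nat \<Rightarrow> bool) \<Rightarrow> nat \<Rightarrow> bool) \<Rightarrow> nat list \<Rightarrow> bool" where
  "Fr c [] = False"
| "Fr c (l # r) = (Fr c r \<noteq> c (par r) l)"

definition F :: "((nat \<Rightarrow> bool) \<Rightarrow> nat \<Rightarrow> bool) \<Rightarrow> nat list \<Rightarrow> bool" where
  "F c w = Fr c (rev w)"

lemma F_Nil[simp]: "F c [] = False"
  by (simp add: F_def)

lemma F_snoc: "F c (w @ [l]) = (F c w \<noteq> c (par w) l)"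
  by (simp add: F_def)

definition sh :: "((nat \<Rightarrow> bool) \<Rightarrow> nat \<Rightarrow> bool) \<Rightarrow> nat list \<Rightarrow> (nat \<Rightarrow> bool) \<Rightarrow> nat \<Rightarrow> bool" where
  "sh c u = (\<lambda>s l. c (\<lambda>p. s p \<noteq> par u p) l)"

lemma F_append: "F c (u @ v) = (F c u \<noteq> F (sh c u) v)"
proof (induction v rule: rev_induct)
  case Nil
  then show ?case by simp
next
  case (snoc l v)
  have "par (u @ v) = (\<lambda>p. par v p \<noteq> par u p)" by (auto simp: par_append)
  then show ?case using snoc F_snoc[of c "u @ v" l] F_snoc[of "sh c u" v l]
    by (auto simp: sh_def)
qed

definition good :: "((nat \<Rightarrow> bool) \<Rightarrow> nat \<Rightarrow> bool) \<Rightarrow> bool" where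
  "good c \<longleftrightarrow> (\<forall>s i. 1 \<le> i \<longrightarrow> c (s(i := \<not> s i)) i = c s i) \<and>
     (\<forall>s i j. 1 \<le> i \<longrightarrow> 1 \<le> j \<longrightarrow> farp i j \<longrightarrow>
        (c s i \<noteq> c (s(i := \<not> s i)) j) = (c s j \<noteq> c (s(j := \<not> s j)) i))"

lemma flip_shift: "(\<lambda>p. (s(i := \<not> s i)) p \<noteq> q p) = (\<lambda>p. s p \<noteq> q p)(i := \<not> (s i \<noteq> q i))"
  by (rule ext) auto

lemma good_sh: "good c \<Longrightarrow> good (sh c u)"
  unfolding good_def sh_def flip_shift by blast

lemma sh_even: "(\<forall>p. \<not> par u p) \<Longrightarrow> sh c u = c"
  by (auto simp: sh_def)

lemma par_single: "par [i] = (\<lambda>p. False)(i := True)"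
  by (rule ext) (auto simp: par_def)

lemma par_ii: "par [i, i] = (\<lambda>p. False)"
  by (auto simp: par_def)

lemma par_ij: "par [i, j] = par [j, i]"
  by (auto simp: par_def)

lemma F_step: "(u, v) \<in> tw_step n \<Longrightarrow> good c \<Longrightarrow> F c u = F c v"
proof (induction rule: tw_step.induct)
  case (invol xs ys i)
  let ?c = "sh c xs"
  have g: "good ?c" using invol good_sh by blast
  have h: "\<forall>s i. 1 \<le> i \<longrightarrow> ?c (s(i := \<not> s i)) i = ?c s i" using g unfolding good_def by blast
  have "?c ((\<lambda>p. False)(i := True)) i = ?c (\<lambda>p. False) i"
    using h[rule_format, of i "\<lambda>p. False"] invol(3) by simp
  then have "F ?c [i, i] = False"
    using F_snoc[of ?c "[i]" i] F_snoc[of ?c "[]" i] by (simp add: par_single)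
  moreover have "sh ?c [i, i] = ?c" by (rule sh_even) (simp add: par_ii)
  moreover have e1: "F c (xs @ [i,i] @ ys) = (F c xs \<noteq> F ?c ([i,i] @ ys))" by (rule F_append)
  moreover have e2: "F ?c ([i,i] @ ys) = (F ?c [i,i] \<noteq> F (sh ?c [i,i]) ys)" by (rule F_append)
  moreover have e3: "F c (xs @ ys) = (F c xs \<noteq> F ?c ys)" by (rule F_append)
  ultimately show ?case by simp
next
  case (comm xs ys i j)
  let ?c = "sh c xs"
  have g: "good ?c" using comm good_sh by blast
  have 1: "F ?c [i, j] = (?c (\<lambda>p. False) i \<noteq> ?c ((\<lambda>p. False)(i := True)) j)"
    using F_snoc[of ?c "[i]" j] F_snoc[of ?c "[]" i] by (simp add: par_single)
  have 2: "F ?c [j, i] = (?c (\<lambda>p. False) j \<noteq> ?c ((\<lambda>p. False)(j := True)) i)"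
    using F_snoc[of ?c "[j]" i] F_snoc[of ?c "[]" j] by (simp add: par_single)
  have h: "\<forall>s i j. 1 \<le> i \<longrightarrow> 1 \<le> j \<longrightarrow> farp i j \<longrightarrow>
        (?c s i \<noteq> ?c (s(i := \<not> s i)) j) = (?c s j \<noteq> ?c (s(j := \<not> s j)) i)"
    using g unfolding good_def by blast
  have "farp i j" using comm(5) by (simp add: farp_def)
  then have "F ?c [i, j] = F ?c [j, i]" unfolding 1 2
    using h[rule_format, of i j "\<lambda>p. False"] comm(3,4) by simp
  moreover have "sh ?c [i, j] = sh ?c [j, i]" by (simp add: sh_def par_ij)
  moreover have e1: "F c (xs @ [i,j] @ ys) = (F c xs \<noteq> F ?c ([i,j] @ ys))" by (rule F_append)
  moreover have e2: "F ?c ([i,j] @ ys) = (F ?c [i,j] \<noteq> F (sh ?c [i,j]) ys)" by (rule F_append)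
  moreover have e3: "F c (xs @ [j,i] @ ys) = (F c xs \<noteq> F ?c ([j,i] @ ys))" by (rule F_append)
  moreover have e4: "F ?c ([j,i] @ ys) = (F ?c [j,i] \<noteq> F (sh ?c [j,i]) ys)" by (rule F_append)
  ultimately show ?case by simp
qed

lemma F_Estar: "(u, v) \<in> (E n)\<^sup>* \<Longrightarrow> good c \<Longrightarrow> F c u = F c v"
  by (induction rule: rtrancl_induct) (auto dest: F_step)

lemma F_cls: "v \<in> cls n u \<Longrightarrow> good c \<Longrightarrow> F c v = F c u"
  by (auto simp: in_cls tw_eq_iff dest: F_Estar)

lemma par_step: "(u, v) \<in> tw_step n \<Longrightarrow> par u = par v"
  by (induction rule: tw_step.induct) (auto simp: par_def count_list_append' fun_eq_iff)

lemma par_cls: "v \<in> cls n u \<Longrightarrow> par v = par u"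
proof -
  assume "v \<in> cls n u"
  then have "(u, v) \<in> (E n)\<^sup>*" by (auto simp: in_cls tw_eq_iff)
  then show ?thesis by (induction rule: rtrancl_induct) (auto dest: par_step)
qed

definition cA :: "nat \<Rightarrow> (nat \<Rightarrow> bool) \<Rightarrow> nat \<Rightarrow> bool" where
  "cA i = (\<lambda>s l. l = i \<and> s (i+1) \<and> \<not> (2 \<le> i \<and> s (i-1)))"

definition cB :: "nat \<Rightarrow> (nat \<Rightarrow> bool) \<Rightarrow> nat \<Rightarrow> bool" where
  "cB i = (\<lambda>s l. l = i \<and> s (i-1) \<and> s (i+1))"

definition coord :: "nat \<times> bool \<Rightarrow> (nat \<Rightarrow> bool) \<Rightarrow> nat \<Rightarrow> bool" where
  "coord j = (if snd j then cB (fst j) else cA (fst j))"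

lemma good_cA: "good (cA k)"
  unfolding good_def cA_def farp_def by auto

lemma good_cB: "good (cB k)"
  unfolding good_def cB_def farp_def by auto

lemma good_coord: "good (coord j)"
  by (simp add: coord_def good_cA good_cB)

lemma FA: "1 \<le> i \<Longrightarrow> F (coord (k, b)) (Aw i) = (k = i \<and> \<not> b)"
  by (auto simp: coord_def cA_def cB_def F_def Aw_def par_def)

lemma FB: "2 \<le> i \<Longrightarrow> F (coord (k, b)) (Bw i) = (k = i \<and> b)"
  by (auto simp: coord_def cA_def cB_def F_def Bw_def par_def)

section \<open>Spans over GF(2)\<close>

definition symd :: "'a set \<Rightarrow> 'a set \<Rightarrow> 'a set" where
  "symd P Q = (P - Q) \<union> (Q - P)"

inductive_set spn :: "'a set set \<Rightarrow> 'a set set" for A where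
  spn_empty: "{} \<in> spn A"
| spn_add: "a \<in> A \<Longrightarrow> P \<in> spn A \<Longrightarrow> symd a P \<in> spn A"

lemma symd_assoc: "symd (symd a P) Q = symd a (symd P Q)"
  by (auto simp: symd_def)

lemma symd_empty[simp]: "symd {} P = P" "symd P {} = P"
  by (auto simp: symd_def)

lemma symd_self: "symd a (symd a P) = P"
  by (auto simp: symd_def)

lemma symd_swap: "symd b (symd a P) = symd a (symd b P)"
  by (auto simp: symd_def)

lemma spn_sd: "P \<in> spn A \<Longrightarrow> Q \<in> spn A \<Longrightarrow> symd P Q \<in> spn A"
  by (induction rule: spn.induct) (auto simp: symd_assoc intro: spn.intros)

lemma spn_insert: "spn (insert a A) \<subseteq> spn A \<union> (symd a) ` spn A"
proof
  fix P assume "P \<in> spn (insert a A)"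
  then show "P \<in> spn A \<union> (symd a) ` spn A"
  proof (induction rule: spn.induct)
    case spn_empty
    then show ?case by (auto intro: spn.intros)
  next
    case (spn_add b P)
    show ?case
    proof (cases "b = a")
      case True
      then show ?thesis using spn_add.IH by (auto simp: symd_self)
    next
      case False
      then have b: "b \<in> A" using spn_add by auto
      from spn_add.IH show ?thesis
      proof
        assume "P \<in> spn A" then show ?thesis using b by (auto intro: spn.intros)
      next
        assume "P \<in> (symd a) ` spn A"
        then obtain Q where "Q \<in> spn A" "P = symd a Q" by auto
        then show ?thesis using b by (auto simp: symd_swap intro: spn.intros)
      qed
    qed
  qed
qed

lemma spn_card:
  fixes A :: "'a set set"
  shows "finite A \<Longrightarrow> finite (spn A) \<and> card (spn A) \<le> 2 ^ card A"
proof (induction rule: finite_induct)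
  case empty
  have "spn ({} :: 'a set set) \<subseteq> {{}}"
  proof
    fix P assume "P \<in> spn ({} :: 'a set set)" then show "P \<in> {{}}" by (induction rule: spn.induct) auto
  qed
  then have "spn ({} :: 'a set set) = {{}}" by (auto intro: spn.intros)
  then show ?case by simp
next
  case (insert a A)
  have f: "finite (spn A \<union> (symd a) ` spn A)" using insert by auto
  have "card (spn (insert a A)) \<le> card (spn A \<union> (symd a) ` spn A)"
    using card_mono[OF f spn_insert] .
  also have "\<dots> \<le> card (spn A) + card ((symd a) ` spn A)" by (rule card_Un_le)
  also have "\<dots> \<le> card (spn A) + card (spn A)" using card_image_le insert by auto
  also have "\<dots> \<le> 2 ^ card (insert a A)" using insert by simp
  finally show ?case using finite_subset[OF spn_insert f] by simp
qed

definition Jm :: "nat \<Rightarrow> (nat \<times> bool) set" where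
  "Jm m = (\<lambda>i. (i, False)) ` {1..m} \<union> (\<lambda>i. (i, True)) ` {2..m}"

lemma Jm_finite: "finite (Jm m)"
  by (simp add: Jm_def)

lemma Jm_card: "card (Jm m) = 2 * m - 1"
proof -
  have "card (Jm m) = card ((\<lambda>i. (i, False)) ` {1..m}) + card ((\<lambda>i. (i, True)) ` {2..m})"
    unfolding Jm_def by (rule card_Un_disjoint) auto
  also have "\<dots> = card {1..m} + card {2..m}"
    by (simp add: card_image inj_on_def)
  finally show ?thesis by simp
qed

definition rep :: "nat list set \<Rightarrow> nat list" where
  "rep x = (SOME w. w \<in> x)"

definition Phi :: "nat \<Rightarrow> nat list set \<Rightarrow> (nat \<times> bool) set" where
  "Phi m x = {j \<in> Jm m. F (coord j) (rep x)}"

lemma Phi_cls: "w \<in> tw_words n \<Longrightarrow> Phi m (cls n w) = {j \<in> Jm m. F (coord j) w}"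
proof -
  assume w: "w \<in> tw_words n"
  have "rep (cls n w) \<in> cls n w" unfolding rep_def using cls_self[OF w] by (rule someI)
  then show ?thesis unfolding Phi_def using F_cls good_coord by blast
qed

definition evn :: "nat \<Rightarrow> nat list set \<Rightarrow> bool" where
  "evn n x \<longleftrightarrow> (\<exists>w. w \<in> tw_words n \<and> x = cls n w \<and> (\<forall>p. \<not> par w p))"

lemma evn_mult: "evn n x \<Longrightarrow> evn n y \<Longrightarrow> evn n (x \<otimes>\<^bsub>twin_group n\<^esub> y)"
proof -
  assume "evn n x" "evn n y"
  then obtain u v where uv: "u \<in> tw_words n" "v \<in> tw_words n" "x = cls n u" "y = cls n v"
    "\<forall>p. \<not> par u p" "\<forall>p. \<not> par v p" unfolding evn_def by blast
  then have "x \<otimes>\<^bsub>twin_group n\<^esub> y = cls n (u @ v)" "\<forall>p. \<not> par (u @ v) p"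
    by (auto simp: mult_tw par_append)
  then show ?thesis unfolding evn_def using uv by (intro exI[of _ "u @ v"]) auto
qed

lemma evn_inv: "evn n x \<Longrightarrow> evn n (inv\<^bsub>twin_group n\<^esub> x)"
proof -
  assume "evn n x"
  then obtain u where u: "u \<in> tw_words n" "x = cls n u" "\<forall>p. \<not> par u p" unfolding evn_def by blast
  then have "inv\<^bsub>twin_group n\<^esub> x = cls n (rev u)" by (simp add: inv_tw)
  then show ?thesis unfolding evn_def using u by (auto intro!: exI[of _ "rev u"])
qed

lemma evn_one: "evn n (\<one>\<^bsub>twin_group n\<^esub>)"
  unfolding evn_def by (auto simp: one_tw intro!: exI[of _ "[]"])

lemma evn_comm: "x \<in> carrier (twin_group n) \<Longrightarrow> y \<in> carrier (twin_group n) \<Longrightarrow>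
   evn n (x \<otimes>\<^bsub>twin_group n\<^esub> y \<otimes>\<^bsub>twin_group n\<^esub> inv\<^bsub>twin_group n\<^esub> x \<otimes>\<^bsub>twin_group n\<^esub> inv\<^bsub>twin_group n\<^esub> y)"
proof -
  assume "x \<in> carrier (twin_group n)" "y \<in> carrier (twin_group n)"
  then obtain u v where uv: "u \<in> tw_words n" "v \<in> tw_words n" "x = cls n u" "y = cls n v"
    by (auto simp: carrier_tw)
  then show ?thesis unfolding evn_def
    by (auto simp: mult_tw inv_tw par_append intro!: exI[of _ "u @ v @ rev u @ rev v"])
qed

lemma D_evn: "x \<in> derived (twin_group n) (carrier (twin_group n)) \<Longrightarrow> evn n x"
  unfolding derived_def
proof (induction rule: generate.induct)
  case one
  then show ?case by (rule evn_one)
next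
  case (incl h)
  then show ?case using evn_comm by blast
next
  case (inv h)
  then show ?case using evn_comm evn_inv by blast
next
  case (eng h1 h2)
  then show ?case using evn_mult by blast
qed

lemma evn_carrier: "evn n x \<Longrightarrow> x \<in> carrier (twin_group n)"
  unfolding evn_def by (auto simp: carrier_tw)

lemma Phi_mult: "evn n x \<Longrightarrow> y \<in> carrier (twin_group n) \<Longrightarrow>
   Phi m (x \<otimes>\<^bsub>twin_group n\<^esub> y) = symd (Phi m x) (Phi m y)"
proof -
  assume "evn n x" "y \<in> carrier (twin_group n)"
  then obtain u v where uv: "u \<in> tw_words n" "v \<in> tw_words n" "x = cls n u" "y = cls n v" "\<forall>p. \<not> par u p"
    by (auto simp: carrier_tw evn_def)
  have "F (coord j) (u @ v) = (F (coord j) u \<noteq> F (coord j) v)" for j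
    using F_append[of "coord j" u v] sh_even[OF uv(5)] by simp
  then show ?thesis using uv by (auto simp: mult_tw Phi_cls symd_def)
qed

lemma Phi_one: "Phi m (\<one>\<^bsub>twin_group n\<^esub>) = {}"
  by (simp add: one_tw Phi_cls)

lemma Phi_inv: "evn n x \<Longrightarrow> Phi m (inv\<^bsub>twin_group n\<^esub> x) = Phi m x"
proof -
  assume x: "evn n x"
  interpret G: group "twin_group n" by (rule group_tw)
  have xc: "x \<in> carrier (twin_group n)" using evn_carrier[OF x] .
  have "symd (Phi m x) (Phi m (inv\<^bsub>twin_group n\<^esub> x)) = {}"
    using Phi_mult[OF x G.inv_closed[OF xc], of m] Phi_one[of m n] G.r_inv[OF xc] by simp
  then show ?thesis by (auto simp: symd_def)
qed

lemma PhiA: "1 \<le> i \<Longrightarrow> i \<le> m \<Longrightarrow> Phi m (cls (m+2) (Aw i)) = {(i, False)}"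
  by (auto simp: Phi_cls FA Jm_def)

lemma PhiB: "2 \<le> i \<Longrightarrow> i \<le> m \<Longrightarrow> Phi m (cls (m+2) (Bw i)) = {(i, True)}"
  by (auto simp: Phi_cls FB Jm_def)

lemma lower:
  assumes S: "S \<subseteq> derived (twin_group (m+2)) (carrier (twin_group (m+2)))" "finite S"
    and gen: "generate (twin_group (m+2)) S = derived (twin_group (m+2)) (carrier (twin_group (m+2)))"
  shows "card (Jm m) \<le> card S"
proof -
  let ?G = "twin_group (m+2)"
  let ?D = "derived ?G (carrier ?G)"
  interpret G: group ?G by (rule group_tw)
  have Dsub: "subgroup ?D ?G" by (rule G.derived_is_subgroup) simp
  have 1: "Phi m x \<in> spn (Phi m ` S)" if "x \<in> generate ?G S" for x
    using that
  proof (induction rule: generate.induct)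
    case one
    then show ?case by (simp add: Phi_one spn.intros)
  next
    case (incl h)
    then show ?case using spn.spn_add[of "Phi m h" "Phi m ` S" "{}"] by (simp add: spn.intros)
  next
    case (inv h)
    then have "evn (m+2) h" using S D_evn by blast
    then show ?case using inv spn.spn_add[of "Phi m h" "Phi m ` S" "{}"] by (simp add: Phi_inv spn.intros)
  next
    case (eng h1 h2)
    have "evn (m+2) h1" using eng.hyps(1) gen D_evn by blast
    moreover have "h2 \<in> carrier ?G" using eng.hyps(2) gen Dsub subgroup.subset by blast
    ultimately show ?case using eng.IH by (simp add: Phi_mult spn_sd)
  qed
  have 2: "T \<in> Phi m ` ?D" if "finite T" "T \<subseteq> Jm m" for T
    using that
  proof (induction rule: finite_induct)
    case empty
    have "\<one>\<^bsub>?G\<^esub> \<in> ?D" using subgroup.one_closed[OF Dsub] .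
    then show ?case using Phi_one[of m "m+2"] by (metis image_eqI)
  next
    case (insert j T)
    obtain x where x: "x \<in> ?D" "T = Phi m x" using insert by auto
    obtain g where g: "g \<in> ?D" "Phi m g = {j}"
    proof (cases "snd j")
      case True
      then have j: "2 \<le> fst j" "fst j \<le> m" "j = (fst j, True)" using insert(4) by (auto simp: Jm_def)
      show ?thesis by (rule that[OF B_in_D[OF j(1,2)]]) (subst PhiB[OF j(1,2)], metis j(3))
    next
      case False
      then have j: "1 \<le> fst j" "fst j \<le> m" "j = (fst j, False)" using insert(4) by (auto simp: Jm_def)
      show ?thesis by (rule that[OF A_in_D[OF j(1,2)]]) (subst PhiA[OF j(1,2)], metis j(3))
    qed
    have xc: "x \<in> carrier ?G" using x(1) Dsub subgroup.subset by blast
    have "Phi m (g \<otimes>\<^bsub>?G\<^esub> x) = symd {j} T"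
      using Phi_mult[OF D_evn[OF g(1)] xc, of m] x g by simp
    also have "\<dots> = insert j T" using insert(2) by (auto simp: symd_def)
    finally show ?case using subgroup.m_closed[OF Dsub g(1) x(1)] by (metis image_eqI)
  qed
  have fin: "finite (spn (Phi m ` S))" and cs: "card (spn (Phi m ` S)) \<le> 2 ^ card (Phi m ` S)"
    using spn_card[of "Phi m ` S"] S(2) by auto
  have "Pow (Jm m) \<subseteq> Phi m ` ?D"
  proof
    fix T assume "T \<in> Pow (Jm m)"
    then have "T \<subseteq> Jm m" by simp
    moreover then have "finite T" using Jm_finite finite_subset by blast
    ultimately show "T \<in> Phi m ` ?D" using 2 by blast
  qed
  also have "\<dots> \<subseteq> spn (Phi m ` S)"
  proof (rule image_subsetI)
    fix x assume "x \<in> ?D" then show "Phi m x \<in> spn (Phi m ` S)" using 1 gen by simp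
  qed
  finally have "card (Pow (Jm m)) \<le> card (spn (Phi m ` S))" by (rule card_mono[OF fin])
  also have "\<dots> \<le> 2 ^ card (Phi m ` S)" by (rule cs)
  also have "\<dots> \<le> 2 ^ card S" using card_image_le[OF S(2)] by simp
  finally have "(2::nat) ^ card (Jm m) \<le> 2 ^ card S" by (simp only: card_Pow[OF Jm_finite])
  then show ?thesis by simp
qed

theorem theorem1p2:
  fixes m :: nat
  assumes "m \<ge> 1"
  shows "has_rank (twin_group (m + 2))
           (derived (twin_group (m + 2)) (carrier (twin_group (m + 2))))
           (2 * m - 1)"
proof -
  have fS: "finite (Sg m)" by (simp add: Sg_def)
  have "card (Sg m) \<le> card ((\<lambda>i. cls (m+2) (Aw i)) ` {1..m}) + card ((\<lambda>i. cls (m+2) (Bw i)) ` {2..m})"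
    unfolding Sg_def by (rule card_Un_le)
  also have "\<dots> \<le> card {1..m} + card {2..(m::nat)}"
    by (intro add_mono card_image_le) auto
  also have "\<dots> = 2 * m - 1" using assms by simp
  finally have le: "card (Sg m) \<le> 2 * m - 1" .
  have ge: "2 * m - 1 \<le> card (Sg m)" using lower[OF Sg_sub_D fS gen_Sg] Jm_card by simp
  show ?thesis unfolding has_rank_def
  proof (intro conjI allI impI)
    show "\<exists>S. S \<subseteq> derived (twin_group (m + 2)) (carrier (twin_group (m + 2))) \<and> finite S \<and>
        card S = 2 * m - 1 \<and> generate (twin_group (m + 2)) S = derived (twin_group (m + 2)) (carrier (twin_group (m + 2)))"
      using Sg_sub_D fS le ge gen_Sg by (intro exI[of _ "Sg m"]) auto
  next
    fix S assume "S \<subseteq> derived (twin_group (m + 2)) (carrier (twin_group (m + 2))) \<and> finite S \<and>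
       generate (twin_group (m + 2)) S = derived (twin_group (m + 2)) (carrier (twin_group (m + 2)))"
    then show "2 * m - 1 \<le> card S" using lower[of S m] Jm_card by auto
  qed
qed

end
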